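(* For a nonzero integer $k$ let $$P_k(t)=k-3kt+5kt^2-7kt^3+(8k+1)t^4-7kt^5+5kt^6-3kt^7+kt^8,$$ the Alexander polynomial of the 2-bridge knot $K([2,2,2,2k,-2,-2,-2,-2])$. Then: (1) if $k\in\{1,2\}$, no zero of $P_k$ is real or of modulus $1$; (2) if $k\in\{3,4,5,6\}$, $P_k$ has exactly four zeros of modulus $1$ (all non-real) and four non-real zeros not of modulus $1$; (3) if $k\ge7$, all eight zeros of $P_k$ have modulus $1$; (4) if $k<0$, $P_k$ has exactly two real zeros and six non-real zeros of modulus $1$. In particular $P_k$ has no real zero when $k>0$. *)

theory Defs
  imports Complex_Main "HOL-Computational_Algebra.Polynomial"
begin

definition alex_poly :: "int \<Rightarrow> complex poly" where
  "alex_poly k = map_poly of_int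
     [:k, -3*k, 5*k, -7*k, 8*k+1, -7*k, 5*k, -3*k, k:]"

definition root_count :: "complex poly \<Rightarrow> complex set \<Rightarrow> nat" where
  "root_count p S = (\<Sum>z\<in>{z\<in>S. poly p z = 0}. order z p)"

end

theory Submission
  imports Defs "HOL-Computational_Algebra.Fundamental_Theorem_Algebra"
begin


lemma alex_eq: "alex_poly k = [:of_int k, of_int(-3*k), of_int(5*k), of_int(-7*k), of_int(8*k+1), of_int(-7*k), of_int(5*k), of_int(-3*k), of_int k:]"
  by (simp add: alex_poly_def map_poly_pCons)

lemma poly_alex: "poly (alex_poly k) z = of_int k*(z^2+1)*(z-1)^2*(z^4-z^3+z^2-z+1) + z^4"
  unfolding alex_eq by (simp add: algebra_simps power2_eq_square power3_eq_cube power4_eq_xxxx numeral_eq_Suc)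

lemma alex_nz: "k \<noteq> 0 \<Longrightarrow> alex_poly k \<noteq> 0"
  unfolding alex_eq by simp

lemma deg_alex: "k \<noteq> 0 \<Longrightarrow> degree (alex_poly k) = 8"
  unfolding alex_eq by simp

lemma pderiv_alex: "poly (pderiv (alex_poly k)) z = 8*of_int k*z^7 - 21*of_int k*z^6 + 30*of_int k*z^5 - 35*of_int k*z^4 + 4*(8*of_int k+1)*z^3 - 21*of_int k*z^2 + 10*of_int k*z - 3*of_int k"
  unfolding alex_eq by (simp add: pderiv_pCons algebra_simps numeral_eq_Suc)



lemma Qrel: assumes "z \<noteq> 0"
  shows "poly (alex_poly k) z = z^4 * (of_int k*(z+1/z)*((z+1/z)-2)*((z+1/z)^2-(z+1/z)-1)+1)"
proof -
  define x where "x = z + 1/z"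
  have zx: "z*x = z^2+1" using assms by (simp add: x_def field_simps power2_eq_square)
  have "z^4 * (of_int k*x*(x-2)*(x^2-x-1)+1) = of_int k*(z*x)*(z*x-2*z)*((z*x)^2 - z*(z*x) - z^2) + z^4"
    by algebra
  also have "\<dots> = of_int k*(z^2+1)*(z-1)^2*(z^4-z^3+z^2-z+1) + z^4"
    unfolding zx by algebra
  finally show ?thesis by (simp add: poly_alex x_def)
qed

lemma dQrel: assumes "z \<noteq> 0"
  shows "poly (pderiv (alex_poly k)) z = 4*z^3*(of_int k*(z+1/z)*((z+1/z)-2)*((z+1/z)^2-(z+1/z)-1)+1)
     + z^2*(z^2-1)*of_int k*(4*(z+1/z)^3-9*(z+1/z)^2+2*(z+1/z)+2)"
proof -
  define x where "x = z + 1/z"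
  have zx: "z*x = z^2+1" using assms by (simp add: x_def field_simps power2_eq_square)
  have "4*z^3*(of_int k*x*(x-2)*(x^2-x-1)+1) + z^2*(z^2-1)*of_int k*(4*x^3-9*x^2+2*x+2)
    = 4*of_int k*(z*x)*(z*x-2*z)*((z*x)^2 - z*(z*x) - z^2)/z + 4*z^3 + (z^2-1)*of_int k*(4*(z*x)^3-9*z*(z*x)^2+2*z^2*(z*x)+2*z^3)/z"
    using assms by (simp add: field_simps) algebra
  also have "\<dots> = 8*of_int k*z^7 - 21*of_int k*z^6 + 30*of_int k*z^5 - 35*of_int k*z^4 + 4*(8*of_int k+1)*z^3 - 21*of_int k*z^2 + 10*of_int k*z - 3*of_int k"
    unfolding zx using assms by (simp add: field_simps) algebra
  finally show ?thesis by (simp add: pderiv_alex x_def)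
qed

lemma Dint: "(k::int) \<noteq> 0 \<Longrightarrow> 20*k^3 - 152*k^2 + 133*k + 256 \<noteq> 0"
proof
  assume k: "k \<noteq> 0" and e: "20*k^3 - 152*k^2 + 133*k + 256 = 0"
  have e2: "k*(k*(20*k-152) + 133) = -256" using e by (simp add: algebra_simps power2_eq_square power3_eq_cube)
  have "k \<le> -1 \<or> k \<ge> 8 \<or> k \<in> {1..7}" using k by auto
  moreover have "k \<le> -1 \<Longrightarrow> False"
  proof -
    assume h: "k \<le> -1"
    have "k*(20*k-152) \<ge> 172" using h mult_mono[of 1 "-k" 172 "152-20*k"] by (simp add: algebra_simps)
    hence "k*(k*(20*k-152) + 133) \<le> -305" using h mult_mono[of 1 "-k" 305 "k*(20*k-152) + 133"] by (simp add: algebra_simps)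
    thus False using e2 by simp
  qed
  moreover have "k \<ge> 8 \<Longrightarrow> False"
  proof -
    assume h: "k \<ge> 8"
    have "k*(20*k-152) \<ge> 0" using h by simp
    hence "k*(k*(20*k-152) + 133) \<ge> 0" using h by simp
    thus False using e2 by simp
  qed
  moreover have "k \<in> {1..7} \<Longrightarrow> False"
  proof -
    assume "k \<in> {1..7}"
    hence "k \<in> {1,2,3,4,5,6,7}" by auto
    thus False using e2 by auto
  qed
  ultimately show False by blast
qed



lemma no_common:
  fixes x K :: complex
  assumes q: "K*x*(x-2)*(x^2-x-1)+1 = 0" and d: "4*x^3-9*x^2+2*x+2 = 0"
  shows "20*K^3 - 152*K^2 + 133*K + 256 = 0"
proof -
  define r0 where "r0 = 16 + 6*K + 30*K*x - 19*K*x^2"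
  define r1 where "r1 = 38*K + (64+62*K)*x - 51*K*x^2"
  define r2 where "r2 = 102*K + 254*K*x + (256-211*K)*x^2"
  have "16*(K*x*(x-2)*(x^2-x-1)+1) = (4*K*x - 3*K)*(4*x^3-9*x^2+2*x+2) + r0"
    unfolding r0_def by algebra
  hence h0: "r0 = 0" using q d by simp
  have "4*x*r0 = -19*K*(4*x^3-9*x^2+2*x+2) + r1"
    unfolding r0_def r1_def by algebra
  hence h1: "r1 = 0" using h0 d by simp
  have "4*x*r1 = -51*K*(4*x^3-9*x^2+2*x+2) + r2"
    unfolding r2_def r1_def by algebra
  hence h2: "r2 = 0" using h1 d by simp
  have "(16384 + 2368*K - 128*K^2)*r0 + (-7680*K + 1504*K^2)*r1 + (1216*K - 352*K^2)*r2
     = 1024*(20*K^3 - 152*K^2 + 133*K + 256)"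
    unfolding r0_def r1_def r2_def by algebra
  hence "1024*(20*K^3 - 152*K^2 + 133*K + 256) = 0" using h0 h1 h2 by (simp only: mult_zero_right add_0)
  thus ?thesis by (metis mult_eq_0_iff zero_neq_numeral)
qed

lemma alex0: "poly (alex_poly k) 0 = of_int k" by (simp add: poly_alex)

lemma order1:
  assumes k: "k \<noteq> 0" and r: "poly (alex_poly k) z = 0"
  shows "order z (alex_poly k) = 1"
proof -
  have z0: "z \<noteq> 0" using r k alex0 by auto
  define x where "x = z + 1/z"
  have q: "of_int k*x*(x-2)*(x^2-x-1)+1 = 0"
    using r Qrel[OF z0, of k] z0 by (simp add: x_def)
  have z1: "z^2 \<noteq> 1"
  proof
    assume "z^2 = 1"
    hence "z = 1 \<or> z = -1" by (simp add: power2_eq_1_iff)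
    moreover have "poly (alex_poly k) 1 = 1" by (simp add: poly_alex)
    moreover have "poly (alex_poly k) (-1) = of_int (40*k+1)" by (simp add: poly_alex)
    moreover have "(of_int (40*k+1)::complex) \<noteq> 0" by (simp only: of_int_eq_0_iff) presburger
    ultimately show False using r by auto
  qed
  have dnz: "4*x^3-9*x^2+2*x+2 \<noteq> 0"
  proof
    assume d: "4*x^3-9*x^2+2*x+2 = 0"
    have "of_int (20*k^3 - 152*k^2 + 133*k + 256) = (0::complex)"
      using no_common[OF q d] by simp
    hence "20*k^3 - 152*k^2 + 133*k + 256 = 0" by (simp only: of_int_eq_0_iff)
    thus False using Dint[OF k] by simp
  qed
  have "poly (pderiv (alex_poly k)) z = z^2*(z^2-1)*of_int k*(4*x^3-9*x^2+2*x+2)"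
    using dQrel[OF z0, of k] q by (simp add: x_def)
  hence "poly (pderiv (alex_poly k)) z \<noteq> 0" using z0 z1 k dnz by simp
  hence "order z (pderiv (alex_poly k)) = 0" by (rule order_0I)
  thus ?thesis using order_pderiv[OF alex_nz[OF k] r] by simp
qed

lemma root_count_card:
  assumes "k \<noteq> 0"
  shows "root_count (alex_poly k) S = card {z\<in>S. poly (alex_poly k) z = 0}"
  unfolding root_count_def using order1[OF assms] by simp

lemma card_roots8:
  assumes k: "k \<noteq> 0"
  shows "card {z. poly (alex_poly k) z = 0} = 8"
proof -
  have "size (proots (alex_poly k)) = 8" using size_proots_complex deg_alex[OF k] by simp
  moreover have "size (proots (alex_poly k)) = (\<Sum>z\<in>{z. poly (alex_poly k) z = 0}. order z (alex_poly k))"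
    using alex_nz[OF k] by (simp add: size_multiset_overloaded_eq)
  moreover have "\<dots> = card {z. poly (alex_poly k) z = 0}" using order1[OF k] by simp
  ultimately show ?thesis by simp
qed



definition Qr :: "int \<Rightarrow> real \<Rightarrow> real" where
  "Qr k x = real_of_int k * x*(x-2)*(x^2-x-1) + 1"

lemma Qr_of_real: "of_int k*(of_real x)*((of_real x)-2)*((of_real x)^2-(of_real x)-1)+1 = (of_real (Qr k x)::complex)"
  by (simp add: Qr_def)

lemma root_iff:
  assumes k: "k \<noteq> 0"
  shows "poly (alex_poly k) z = 0 \<longleftrightarrow> z \<noteq> 0 \<and> of_int k*(z+1/z)*((z+1/z)-2)*((z+1/z)^2-(z+1/z)-1)+1 = 0"
proof (cases "z = 0")
  case True thus ?thesis using k alex0 by simp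
next
  case False thus ?thesis using Qrel[OF False, of k] by simp
qed

lemma quad_iff: "z \<noteq> 0 \<Longrightarrow> (z + 1/z = w) \<longleftrightarrow> z^2 - w*z + 1 = (0::complex)"
  by (auto simp: field_simps power2_eq_square)

lemma quad_nz: "z^2 - w*z + 1 = (0::complex) \<Longrightarrow> z \<noteq> 0"
  by auto

lemma unit_from_x:
  assumes x: "\<bar>x\<bar> < 2" and e: "z^2 - of_real x * z + 1 = 0"
  shows "cmod z = 1 \<and> z \<notin> \<real>"
proof -
  have nr: "z \<notin> \<real>"
  proof
    assume "z \<in> \<real>"
    then obtain r where r: "z = of_real r" by (auto elim: Reals_cases)
    have "of_real (r^2 - x*r + 1) = (0::complex)" using e r by simp
    hence "r^2 - x*r + 1 = 0" by (simp only: of_real_eq_0_iff)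
    moreover have "r^2 - x*r + 1 = (r - x/2)^2 + (1 - x^2/4)" by (simp add: power2_eq_square algebra_simps)
    moreover have "(2-x)*(2+x) > 0" using x by (intro mult_pos_pos) auto
    hence "x^2 < 4" by (simp add: power2_eq_square algebra_simps)
    moreover have "(r - x/2)^2 \<ge> 0" by simp
    ultimately show False by linarith
  qed
  have ec: "(cnj z)^2 - of_real x * cnj z + 1 = 0"
    using arg_cong[OF e, of cnj] by simp
  have "(z - cnj z)*(z + cnj z - of_real x) = (z^2 - of_real x * z + 1) - ((cnj z)^2 - of_real x * cnj z + 1)"
    by algebra
  hence "(z - cnj z)*(z + cnj z - of_real x) = 0" using e ec by simp
  moreover have "z \<noteq> cnj z" using nr by (metis Reals_cnj_iff)
  ultimately have s: "z + cnj z = of_real x" by simp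
  have c: "cnj z = of_real x - z" using s by (metis add_diff_cancel_left')
  have "z * cnj z = 1 - (z^2 - of_real x * z + 1)" unfolding c by algebra
  hence "z * cnj z = 1" using e by simp
  hence "(of_real (cmod z)::complex)^2 = 1" using complex_norm_square[of z] by simp
  hence "of_real (cmod z ^ 2) = (1::complex)" by simp
  hence "cmod z ^ 2 = 1" by (simp only: of_real_eq_1_iff)
  hence "cmod z = 1 \<or> cmod z = -1" by (simp add: power2_eq_1_iff)
  hence "cmod z = 1" using norm_ge_zero[of z] by linarith
  thus ?thesis using nr by simp
qed



lemma factor2: "z^2 - (a + b)*z + a*b = (z - a)*(z - (b::complex))"
  by algebra

lemma Tset:
  assumes x: "\<bar>x\<bar> < 2"
  shows "\<exists>a. {z. z^2 - of_real x*z + 1 = 0} = {a, cnj a} \<and> a \<noteq> cnj a \<and> Re a = x/2"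
proof -
  define s where "s = sqrt (4 - x^2)"
  have "(2-x)*(2+x) > 0" using x by (intro mult_pos_pos) auto
  hence x4: "4 - x^2 > 0" by (simp add: power2_eq_square algebra_simps)
  hence s2: "s^2 = 4 - x^2" and sp: "s > 0" by (auto simp: s_def)
  define a where "a = Complex (x/2) (s/2)"
  have sum: "a + cnj a = of_real x" by (simp add: a_def complex_eq_iff)
  have prod: "a * cnj a = 1" using s2 by (simp add: a_def complex_eq_iff power2_eq_square field_simps)
  have "\<And>z. z^2 - of_real x*z + 1 = (z - a)*(z - cnj a)"
    using factor2[of _ a "cnj a"] sum prod by simp
  hence "{z. z^2 - of_real x*z + 1 = 0} = {a, cnj a}" by auto
  moreover have "a \<noteq> cnj a" using sp by (simp add: a_def complex_eq_iff)
  moreover have "Re a = x/2" by (simp add: a_def)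
  ultimately show ?thesis by blast
qed

lemma Tset_real:
  assumes x: "x > 2"
  shows "\<exists>a b. {z::complex. z^2 - of_real x*z + 1 = 0} = {of_real a, of_real b} \<and> a \<noteq> b"
proof -
  define s where "s = sqrt (x^2 - 4)"
  have "(x-2)*(x+2) > 0" using x by (intro mult_pos_pos) auto
  hence x4: "x^2 - 4 > 0" by (simp add: power2_eq_square algebra_simps)
  hence s2: "s^2 = x^2 - 4" and sp: "s > 0" by (auto simp: s_def)
  define a where "a = (x + s)/2"
  define b where "b = (x - s)/2"
  have sum: "of_real a + of_real b = (of_real x::complex)" by (simp add: a_def b_def field_simps)
  have "a * b = 1" using s2 by (simp add: a_def b_def power2_eq_square field_simps)
  hence prod: "of_real a * of_real b = (1::complex)" by (metis of_real_1 of_real_mult)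
  have "\<And>z::complex. z^2 - of_real x*z + 1 = (z - of_real a)*(z - of_real b)"
    using factor2[of _ "of_real a" "of_real b"] sum prod by simp
  hence "{z::complex. z^2 - of_real x*z + 1 = 0} = {of_real a, of_real b}" by auto
  moreover have "a \<noteq> b" using sp by (simp add: a_def b_def)
  ultimately show ?thesis by blast
qed

lemma ivt_Qr:
  assumes "a < b" "Qr k a * Qr k b < 0"
  shows "\<exists>x. a < x \<and> x < b \<and> Qr k x = 0"
proof -
  have c: "\<forall>x. a \<le> x \<and> x \<le> b \<longrightarrow> isCont (Qr k) x"
    unfolding Qr_def by (intro allI impI continuous_intros)
  have "Qr k a < 0 \<and> Qr k b > 0 \<or> Qr k a > 0 \<and> Qr k b < 0"
    using assms(2) by (auto simp: mult_less_0_iff)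
  then obtain x where x: "a \<le> x" "x \<le> b" "Qr k x = 0"
    using IVT[of "Qr k" a 0 b] IVT2[of "Qr k" b 0 a] c assms(1) by force
  moreover have "x \<noteq> a" "x \<noteq> b" using x assms(2) by auto
  ultimately show ?thesis by force
qed

lemma Qc_roots_card:
  fixes K :: complex
  assumes "K \<noteq> 0"
  shows "card {w. K*w*(w-2)*(w^2-w-1)+1 = 0} \<le> 4" "finite {w. K*w*(w-2)*(w^2-w-1)+1 = 0}"
proof -
  define q where "q = [:1, 2*K, K, -3*K, K:]"
  have pq: "\<And>w. poly q w = K*w*(w-2)*(w^2-w-1)+1"
    by (simp add: q_def algebra_simps power2_eq_square power3_eq_cube power4_eq_xxxx)
  have q0: "q \<noteq> 0" by (simp add: q_def)
  have dq: "degree q = 4" using assms by (simp add: q_def)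
  show "card {w. K*w*(w-2)*(w^2-w-1)+1 = 0} \<le> 4"
    using card_poly_roots_bound[OF q0] unfolding pq dq .
  show "finite {w. K*w*(w-2)*(w^2-w-1)+1 = 0}"
    using poly_roots_finite[OF q0] unfolding pq .
qed

lemma all_x:
  assumes k: "k \<noteq> 0"
    and d: "distinct [x1, x2, x3, x4]"
    and r: "Qr k x1 = 0" "Qr k x2 = 0" "Qr k x3 = 0" "Qr k x4 = 0"
    and w: "of_int k*w*(w-2)*(w^2-w-1)+1 = (0::complex)"
  shows "w \<in> {of_real x1, of_real x2, of_real x3, of_real x4}"
proof (rule ccontr)
  assume nw: "w \<notin> {of_real x1, of_real x2, of_real x3, of_real x4}"
  define S where "S = {w. of_int k*w*(w-2)*(w^2-w-1)+1 = (0::complex)}"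
  have K: "(of_int k::complex) \<noteq> 0" using k by simp
  have sub: "insert w {of_real x1, of_real x2, of_real x3, of_real x4} \<subseteq> S"
    using w r Qr_of_real[of k] by (auto simp: S_def)
  have "card (insert w {of_real x1, of_real x2, of_real x3, of_real x4}) = 5"
    using d nw by (simp add: of_real_eq_iff)
  moreover have "card (insert w {of_real x1, of_real x2, of_real x3, of_real x4}) \<le> card S"
    using card_mono[OF Qc_roots_card(2)[OF K, folded S_def] sub] .
  ultimately show False using Qc_roots_card(1)[OF K, folded S_def] by simp
qed



definition R :: "real \<Rightarrow> real" where "R x = x*(x-2)*(x^2-x-1)"

lemma Qr_R: "Qr k x = real_of_int k * R x + 1" by (simp add: Qr_def R_def)

lemma R_nonneg_left: "x \<le> -31/50 \<Longrightarrow> R x \<ge> 0"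
proof -
  assume x: "x \<le> -31/50"
  have "x*(x-2) \<ge> 0" using x by (intro mult_nonpos_nonpos) auto
  moreover have "x^2-x-1 \<ge> 0"
  proof -
    have "(x+31/50)*(x-81/50) \<ge> 0" using x by (intro mult_nonpos_nonpos) auto
    moreover have "x^2-x-1 = (x+31/50)*(x-81/50) + 11/2500" by (simp add: algebra_simps power2_eq_square)
    ultimately show ?thesis by linarith
  qed
  ultimately show ?thesis unfolding R_def by simp
qed

lemma R_nonneg_mid: "0 \<le> x \<Longrightarrow> x \<le> 3/2 \<Longrightarrow> R x \<ge> 0"
proof -
  assume x: "0 \<le> x" "x \<le> 3/2"
  have "x*(x-2) \<le> 0" using x by (intro mult_nonneg_nonpos) auto
  moreover have "x^2-x-1 \<le> 0"
  proof -
    have "x*x \<le> x*(3/2)" using x by (intro mult_left_mono) auto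
    thus ?thesis using x by (simp add: power2_eq_square)
  qed
  ultimately show ?thesis unfolding R_def by (simp add: mult_nonpos_nonpos)
qed

lemma R_nonneg_right: "2 \<le> x \<Longrightarrow> R x \<ge> 0"
proof -
  assume x: "2 \<le> x"
  have "x*x \<ge> 2*x" using x by (intro mult_right_mono) auto
  hence "x^2-x-1 \<ge> 0" using x unfolding power2_eq_square by linarith
  thus ?thesis unfolding R_def using x by simp
qed

lemma R6: "3/2 \<le> x \<Longrightarrow> x \<le> 2 \<Longrightarrow> 6 * R x + 1 > 0"
proof -
  assume x: "3/2 \<le> x" "x \<le> 2"
  define u where "u = 2 - x"
  have u: "0 \<le> u" "u \<le> 1/2" using x by (auto simp: u_def)
  have e: "6 * R x + 1 = (2/5)*u*(1/2-u) + (6*(u*u-5/2*u+81/200)^2+1/25*(u-5/8)^2+9/40000)"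
    unfolding R_def u_def by (simp add: field_simps power2_eq_square)
  have "u*(1/2-u) \<ge> 0" using u by simp
  moreover have "6*(u*u-5/2*u+81/200)^2+1/25*(u-5/8)^2 \<ge> 0" by simp
  ultimately show ?thesis unfolding e by linarith
qed

lemma R2: "2 * R x + 1 > 0"
proof -
  have e: "2 * R x + 1 = 2*(x*x-3/2*x-13/20)^2+1/10*(x+1/2)^2+13/100"
    unfolding R_def by (simp add: algebra_simps power2_eq_square)
  show ?thesis unfolding e using zero_le_power2[of "x*x-3/2*x-13/20"] zero_le_power2[of "x+1/2"] by linarith
qed

lemma divdiff:
  assumes k: "k \<noteq> 0" and d: "a \<noteq> b" "a \<noteq> c" "b \<noteq> c" and n: "a \<le> 0" "b \<le> 0" "c \<le> 0"
    and r: "Qr k a = 0" "Qr k b = 0" "Qr k c = 0"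
  shows False
proof -
  define D1 where "D1 = (\<lambda>a b::real. a^3+a^2*b+a*b^2+b^3 - 3*(a^2+a*b+b^2) + (a+b) + 2)"
  have e1: "\<And>a b. Qr k a - Qr k b = (a - b) * real_of_int k * D1 a b"
    unfolding Qr_def D1_def by (simp add: algebra_simps power2_eq_square power3_eq_cube)
  have "(a-b)*real_of_int k * D1 a b = 0" using e1[of a b] r by simp
  hence hab: "D1 a b = 0" using d k by simp
  have "(a-c)*real_of_int k * D1 a c = 0" using e1[of a c] r by simp
  hence hac: "D1 a c = 0" using d k by simp
  define h where "h = a^2+b^2+c^2+a*b+b*c+c*a - 3*(a+b+c) + 1"
  have "D1 a b - D1 a c = (b - c) * h" unfolding D1_def h_def
    by (simp add: algebra_simps power2_eq_square power3_eq_cube)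
  hence "h = 0" using hab hac d by simp
  moreover have "h > 0"
  proof -
    have "a*b \<ge> 0" "b*c \<ge> 0" "c*a \<ge> 0" using n by (auto intro: mult_nonpos_nonpos)
    moreover have "a^2 \<ge> 0" "b^2 \<ge> 0" "c^2 \<ge> 0" by auto
    moreover have "-3*(a+b+c) \<ge> 0" using n by simp
    ultimately show ?thesis unfolding h_def by linarith
  qed
  ultimately show False by simp
qed

lemma no_real_root:
  assumes k: "k > 0"
  shows "poly (alex_poly k) (of_real t) \<noteq> 0"
proof -
  have e: "poly (alex_poly k) (of_real t) = of_real (real_of_int k*(t^2+1)*(t-1)^2*(t^4-t^3+t^2-t+1) + t^4)"
    by (simp add: poly_alex)
  have q: "t^4-t^3+t^2-t+1 > 0"
  proof -
    have "t^4-t^3+t^2-t+1 = (t^2 - t/2)^2 + 3/4*(t - 2/3)^2 + 2/3"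
      by (simp add: algebra_simps power2_eq_square power3_eq_cube power4_eq_xxxx)
    thus ?thesis by (simp add: add_pos_nonneg add_nonneg_pos)
  qed
  have "real_of_int k*(t^2+1)*(t-1)^2*(t^4-t^3+t^2-t+1) \<ge> 0"
    using k q by (intro mult_nonneg_nonneg) auto
  hence "real_of_int k*(t^2+1)*(t-1)^2*(t^4-t^3+t^2-t+1) + t^4 > 0"
  proof (cases "t = 0")
    case True thus ?thesis using k by simp
  next
    case False hence "t^4 > 0" by simp
    thus ?thesis using \<open>real_of_int k*(t^2+1)*(t-1)^2*(t^4-t^3+t^2-t+1) \<ge> 0\<close> by linarith
  qed
  thus ?thesis unfolding e by (simp only: of_real_eq_0_iff)
qed

lemma real_x_ge2: "(t::real) \<noteq> 0 \<Longrightarrow> 2 \<le> \<bar>t + 1/t\<bar>"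
proof -
  assume t: "t \<noteq> 0"
  show ?thesis
  proof (cases "t > 0")
    case True
    have "t + 1/t - 2 = (t-1)^2/t" using t by (simp add: field_simps power2_eq_square)
    moreover have "(t-1)^2/t \<ge> 0" using True by simp
    ultimately show ?thesis by linarith
  next
    case False
    hence tn: "t < 0" using t by simp
    have "-(t + 1/t) - 2 = (t+1)^2/(-t)" using t by (simp add: field_simps power2_eq_square)
    moreover have "(t+1)^2/(-t) \<ge> 0" using tn by (intro divide_nonneg_pos) auto
    ultimately show ?thesis by linarith
  qed
qed



lemma unit_x:
  assumes "cmod z = 1"
  shows "z \<noteq> 0 \<and> z + 1/z = of_real (2*Re z) \<and> \<bar>2*Re z\<bar> \<le> 2"
proof -
  have "(of_real (cmod z)::complex)^2 = z * cnj z" using complex_norm_square[of z] by simp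
  hence zc: "z * cnj z = 1" using assms by simp
  hence z0: "z \<noteq> 0" by auto
  have "1/z = cnj z" using zc z0 by (simp add: field_simps)
  hence "z + 1/z = of_real (2*Re z)" by (simp add: complex_add_cnj)
  moreover have "\<bar>Re z\<bar> \<le> 1" using abs_Re_le_cmod[of z] assms by simp
  ultimately show ?thesis using z0 by simp
qed

lemma root_x:
  assumes "k \<noteq> 0" "poly (alex_poly k) z = 0"
  shows "z \<noteq> 0 \<and> of_int k*(z+1/z)*((z+1/z)-2)*((z+1/z)^2-(z+1/z)-1)+1 = 0"
  using root_iff[OF assms(1)] assms(2) by simp

lemma x_root:
  assumes "k \<noteq> 0" "Qr k x = 0" "z^2 - of_real x * z + 1 = 0"
  shows "poly (alex_poly k) z = 0"
proof -
  have z0: "z \<noteq> 0" using quad_nz[OF assms(3)] .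
  have "z + 1/z = of_real x" using quad_iff[OF z0] assms(3) by simp
  thus ?thesis using root_iff[OF assms(1)] z0 Qr_of_real[of k x] assms(2) by simp
qed

lemma root_in_x:
  assumes k: "k \<noteq> 0" and d: "distinct [x1, x2, x3, x4]"
    and r: "Qr k x1 = 0" "Qr k x2 = 0" "Qr k x3 = 0" "Qr k x4 = 0"
    and z: "poly (alex_poly k) z = 0"
  shows "\<exists>x\<in>{x1,x2,x3,x4}. z^2 - of_real x * z + 1 = 0 \<and> z + 1/z = of_real x"
proof -
  have z0: "z \<noteq> 0" and q: "of_int k*(z+1/z)*((z+1/z)-2)*((z+1/z)^2-(z+1/z)-1)+1 = 0"
    using root_x[OF k z] by auto
  from all_x[OF k d r q] obtain x where x: "x \<in> {x1,x2,x3,x4}" "z + 1/z = of_real x" by auto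
  thus ?thesis using quad_iff[OF z0] by blast
qed

lemma case_ge7:
  assumes k: "k \<ge> 7" and z: "poly (alex_poly k) z = 0"
  shows "cmod z = 1"
proof -
  have k0: "k \<noteq> 0" using k by simp
  have kr: "real_of_int k \<ge> 7" using k by simp
  have v1: "Qr k (-2) > 0" using kr by (simp add: Qr_def)
  have v2: "Qr k (-1/2) < 0" using kr by (simp add: Qr_def power2_eq_square)
  have v3: "Qr k 0 > 0" by (simp add: Qr_def)
  have v4: "Qr k (9/5) < 0" using kr by (simp add: Qr_def power2_eq_square)
  have v5: "Qr k 2 > 0" by (simp add: Qr_def)
  obtain x1 where x1: "-2 < x1" "x1 < -1/2" "Qr k x1 = 0" using ivt_Qr[of "-2" "-1/2" k] v1 v2 by (auto simp: mult_pos_neg)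
  obtain x2 where x2: "-1/2 < x2" "x2 < 0" "Qr k x2 = 0" using ivt_Qr[of "-1/2" 0 k] v2 v3 by (auto simp: mult_neg_pos)
  obtain x3 where x3: "0 < x3" "x3 < 9/5" "Qr k x3 = 0" using ivt_Qr[of 0 "9/5" k] v3 v4 by (auto simp: mult_pos_neg)
  obtain x4 where x4: "9/5 < x4" "x4 < 2" "Qr k x4 = 0" using ivt_Qr[of "9/5" 2 k] v4 v5 by (auto simp: mult_neg_pos)
  have d: "distinct [x1,x2,x3,x4]" using x1 x2 x3 x4 by auto
  from root_in_x[OF k0 d x1(3) x2(3) x3(3) x4(3) z] obtain x where
    x: "x \<in> {x1,x2,x3,x4}" "z^2 - of_real x * z + 1 = 0" by blast
  have "\<bar>x\<bar> < 2" using x(1) x1 x2 x3 x4 by auto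
  thus ?thesis using unit_from_x x(2) by blast
qed

lemma case_neg:
  assumes k: "k < 0"
  shows "card {z. poly (alex_poly k) z = 0 \<and> z \<in> \<real>} = 2"
    "\<forall>z. poly (alex_poly k) z = 0 \<longrightarrow> z \<in> \<real> \<or> cmod z = 1"
proof -
  have k0: "k \<noteq> 0" using k by simp
  have kr: "real_of_int k \<le> -1" using k by simp
  have v1: "Qr k (-1) < 0" using kr by (simp add: Qr_def)
  have v2: "Qr k (-1/2) > 0" using kr by (simp add: Qr_def power2_eq_square)
  have v3: "Qr k 0 > 0" by (simp add: Qr_def)
  have v4: "Qr k (4/5) < 0" using kr by (simp add: Qr_def power2_eq_square)
  have v5: "Qr k (17/10) > 0" using kr by (simp add: Qr_def power2_eq_square)
  have v6: "Qr k 2 > 0" by (simp add: Qr_def)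
  have v7: "Qr k 3 < 0" using kr by (simp add: Qr_def power2_eq_square)
  obtain x1 where x1: "-1 < x1" "x1 < -1/2" "Qr k x1 = 0" using ivt_Qr[of "-1" "-1/2" k] v1 v2 by (auto simp: mult_neg_pos)
  obtain x2 where x2: "0 < x2" "x2 < 4/5" "Qr k x2 = 0" using ivt_Qr[of 0 "4/5" k] v3 v4 by (auto simp: mult_pos_neg)
  obtain x3 where x3: "4/5 < x3" "x3 < 17/10" "Qr k x3 = 0" using ivt_Qr[of "4/5" "17/10" k] v4 v5 by (auto simp: mult_neg_pos)
  obtain x4 where x4: "2 < x4" "x4 < 3" "Qr k x4 = 0" using ivt_Qr[of 2 3 k] v6 v7 by (auto simp: mult_pos_neg)
  have d: "distinct [x1,x2,x3,x4]" using x1 x2 x3 x4 by auto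
  obtain a b where ab: "{z::complex. z^2 - of_real x4*z + 1 = 0} = {of_real a, of_real b}" "a \<noteq> b"
    using Tset_real[of x4] x4 by auto
  have sub1: "{z. poly (alex_poly k) z = 0 \<and> z \<in> \<real>} \<subseteq> {of_real a, of_real b}"
  proof
    fix z assume zz: "z \<in> {z. poly (alex_poly k) z = 0 \<and> z \<in> \<real>}"
    hence z: "poly (alex_poly k) z = 0" and zr: "z \<in> \<real>" by auto
    from root_in_x[OF k0 d x1(3) x2(3) x3(3) x4(3) z] obtain x where
      x: "x \<in> {x1,x2,x3,x4}" "z^2 - of_real x * z + 1 = 0" "z + 1/z = of_real x" by blast
    obtain t where t: "z = of_real t" using zr by (auto elim: Reals_cases)
    have t0: "t \<noteq> 0" using root_x[OF k0 z] t by simp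
    have "of_real (t + 1/t) = (of_real x :: complex)" using x(3) t by simp
    hence "t + 1/t = x" by (simp only: of_real_eq_iff)
    hence "\<bar>x\<bar> \<ge> 2" using real_x_ge2[OF t0] by simp
    hence "x = x4" using x(1) x1 x2 x3 by auto
    thus "z \<in> {of_real a, of_real b}" using x(2) ab(1) by blast
  qed
  have sub2: "{of_real a, of_real b} \<subseteq> {z. poly (alex_poly k) z = 0 \<and> z \<in> \<real>}"
  proof -
    have "of_real a \<in> {z::complex. z^2 - of_real x4*z + 1 = 0}" "of_real b \<in> {z::complex. z^2 - of_real x4*z + 1 = 0}"
      using ab(1) by auto
    thus ?thesis using x_root[OF k0 x4(3)] by auto
  qed
  have "{z. poly (alex_poly k) z = 0 \<and> z \<in> \<real>} = {of_real a, of_real b}" using sub1 sub2 by blast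
  thus "card {z. poly (alex_poly k) z = 0 \<and> z \<in> \<real>} = 2" using ab(2) by (simp add: of_real_eq_iff)
  show "\<forall>z. poly (alex_poly k) z = 0 \<longrightarrow> z \<in> \<real> \<or> cmod z = 1"
  proof (intro allI impI)
    fix z assume z: "poly (alex_poly k) z = 0"
    from root_in_x[OF k0 d x1(3) x2(3) x3(3) x4(3) z] obtain x where
      x: "x \<in> {x1,x2,x3,x4}" "z^2 - of_real x * z + 1 = 0" by blast
    show "z \<in> \<real> \<or> cmod z = 1"
    proof (cases "x = x4")
      case True
      hence "z \<in> {of_real a, of_real b}" using x(2) ab(1) by blast
      thus ?thesis by auto
    next
      case False
      hence "\<bar>x\<bar> < 2" using x(1) x1 x2 x3 by auto
      thus ?thesis using unit_from_x x(2) by blast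
    qed
  qed
qed



lemma case_12:
  assumes k: "k \<in> {1,2}" and z: "poly (alex_poly k) z = 0"
  shows "cmod z \<noteq> 1"
proof
  assume u: "cmod z = 1"
  have k0: "k \<noteq> 0" using k by auto
  have kr: "real_of_int k \<ge> 1" "real_of_int k \<le> 2" using k by auto
  from unit_x[OF u] have ux: "z + 1/z = of_real (2*Re z)" by auto
  have "of_int k*(z+1/z)*((z+1/z)-2)*((z+1/z)^2-(z+1/z)-1)+1 = 0" using root_x[OF k0 z] by auto
  hence "(of_real (Qr k (2*Re z))::complex) = 0" unfolding ux Qr_of_real .
  hence q: "Qr k (2*Re z) = 0" by (simp only: of_real_eq_0_iff)
  define y where "y = R (2*Re z)"
  have "real_of_int k * y + 1 > 0"
  proof (cases "y \<ge> 0")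
    case True thus ?thesis using kr by (simp add: add_nonneg_pos)
  next
    case False
    have "(real_of_int k - 2) * y \<ge> 0" using False kr by (intro mult_nonpos_nonpos) auto
    thus ?thesis using R2[of "2*Re z"] unfolding y_def[symmetric] by (simp add: algebra_simps)
  qed
  thus False using q by (simp add: Qr_R y_def)
qed

lemma case_36:
  assumes k: "k \<in> {3..6}"
  shows "card {z. poly (alex_poly k) z = 0 \<and> cmod z = 1} = 4"
proof -
  have k0: "k \<noteq> 0" using k by auto
  have kr: "real_of_int k \<ge> 3" "real_of_int k \<le> 6" using k by auto
  have v1: "Qr k (-31/50) > 0" using kr by (simp add: Qr_def power2_eq_square)
  have v2: "Qr k (-2/5) < 0" using kr by (simp add: Qr_def power2_eq_square)
  have v3: "Qr k 0 > 0" by (simp add: Qr_def)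
  obtain x1 where x1: "-31/50 < x1" "x1 < -2/5" "Qr k x1 = 0" using ivt_Qr[of "-31/50" "-2/5" k] v1 v2 by (auto simp: mult_pos_neg)
  obtain x2 where x2: "-2/5 < x2" "x2 < 0" "Qr k x2 = 0" using ivt_Qr[of "-2/5" 0 k] v2 v3 by (auto simp: mult_neg_pos)
  have only: "x = x1 \<or> x = x2" if x: "-2 \<le> x" "x \<le> 2" "Qr k x = 0" for x
  proof (rule ccontr)
    assume nx: "\<not> (x = x1 \<or> x = x2)"
    have pos: "Qr k x > 0" if "R x \<ge> 0" using that kr by (simp add: Qr_R add_nonneg_pos)
    consider "x \<le> -31/50" | "-31/50 < x \<and> x < 0" | "0 \<le> x \<and> x \<le> 3/2" | "3/2 \<le> x" by linarith
    thus False
    proof cases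
      case 1 thus False using pos R_nonneg_left x(3) by auto
    next
      case 2 thus False using divdiff[OF k0, of x x1 x2] nx x1 x2 x(3) by auto
    next
      case 3 thus False using pos R_nonneg_mid x(3) by auto
    next
      case 4
      show False
      proof (cases "R x \<ge> 0")
        case True thus False using pos x(3) by auto
      next
        case False
        have "(real_of_int k - 6) * R x \<ge> 0" using False kr by (intro mult_nonpos_nonpos) auto
        moreover have "6 * R x + 1 > 0" using R6 4 x(2) by auto
        ultimately have "real_of_int k * R x + 1 > 0" by (simp add: algebra_simps)
        thus False using x(3) by (simp add: Qr_R)
      qed
    qed
  qed
  have ax1: "\<bar>x1\<bar> < 2" "\<bar>x2\<bar> < 2" using x1 x2 by auto
  obtain a1 where a1: "{z. z^2 - of_real x1*z + 1 = 0} = {a1, cnj a1}" "a1 \<noteq> cnj a1" "Re a1 = x1/2"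
    using Tset[OF ax1(1)] by blast
  obtain a2 where a2: "{z. z^2 - of_real x2*z + 1 = 0} = {a2, cnj a2}" "a2 \<noteq> cnj a2" "Re a2 = x2/2"
    using Tset[OF ax1(2)] by blast
  have sub1: "{z. poly (alex_poly k) z = 0 \<and> cmod z = 1} \<subseteq> {a1, cnj a1, a2, cnj a2}"
  proof
    fix z assume "z \<in> {z. poly (alex_poly k) z = 0 \<and> cmod z = 1}"
    hence z: "poly (alex_poly k) z = 0" and u: "cmod z = 1" by auto
    from unit_x[OF u] have z0: "z \<noteq> 0" and ux: "z + 1/z = of_real (2*Re z)" and b: "\<bar>2*Re z\<bar> \<le> 2" by auto
    have "of_int k*(z+1/z)*((z+1/z)-2)*((z+1/z)^2-(z+1/z)-1)+1 = 0" using root_x[OF k0 z] by auto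
    hence "(of_real (Qr k (2*Re z))::complex) = 0" unfolding ux Qr_of_real .
    hence q: "Qr k (2*Re z) = 0" by (simp only: of_real_eq_0_iff)
    have "2*Re z = x1 \<or> 2*Re z = x2" using only[of "2*Re z"] b q by auto
    moreover have "z^2 - of_real (2*Re z) * z + 1 = 0" using quad_iff[OF z0, of "of_real (2*Re z)"] ux by blast
    ultimately show "z \<in> {a1, cnj a1, a2, cnj a2}" using a1(1) a2(1) by auto
  qed
  have sub2: "{a1, cnj a1, a2, cnj a2} \<subseteq> {z. poly (alex_poly k) z = 0 \<and> cmod z = 1}"
  proof -
    have "\<And>z. z \<in> {a1, cnj a1} \<Longrightarrow> poly (alex_poly k) z = 0 \<and> cmod z = 1"
      using a1(1) x_root[OF k0 x1(3)] unit_from_x[OF ax1(1)] by blast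
    moreover have "\<And>z. z \<in> {a2, cnj a2} \<Longrightarrow> poly (alex_poly k) z = 0 \<and> cmod z = 1"
      using a2(1) x_root[OF k0 x2(3)] unit_from_x[OF ax1(2)] by blast
    ultimately show ?thesis by blast
  qed
  have eq: "{z. poly (alex_poly k) z = 0 \<and> cmod z = 1} = {a1, cnj a1, a2, cnj a2}" using sub1 sub2 by blast
  have "Re a1 \<noteq> Re a2" using a1(3) a2(3) x1 x2 by simp
  hence ne: "a1 \<noteq> a2" "a1 \<noteq> cnj a2" "cnj a1 \<noteq> a2" "cnj a1 \<noteq> cnj a2" by auto
  show ?thesis unfolding eq using ne a1(2) a2(2) by auto
qed


lemma no_real_root':
  assumes "k > 0" "z \<in> \<real>" shows "poly (alex_poly k) z \<noteq> 0"
  using assms no_real_root by (auto elim: Reals_cases)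

theorem theoremC1:
  fixes k :: int
  assumes "k \<noteq> 0"
  shows "(k \<in> {1, 2} \<longrightarrow>
            (\<forall>z. poly (alex_poly k) z = 0 \<longrightarrow> z \<notin> \<real> \<and> cmod z \<noteq> 1))
       \<and> (k \<in> {3..6} \<longrightarrow>
            root_count (alex_poly k) {z. cmod z = 1} = 4
          \<and> (\<forall>z. poly (alex_poly k) z = 0 \<and> cmod z = 1 \<longrightarrow> z \<notin> \<real>)
          \<and> root_count (alex_poly k) {z. z \<notin> \<real> \<and> cmod z \<noteq> 1} = 4)
       \<and> (k \<ge> 7 \<longrightarrow> (\<forall>z. poly (alex_poly k) z = 0 \<longrightarrow> cmod z = 1))
       \<and> (k < 0 \<longrightarrow>
            root_count (alex_poly k) \<real> = 2
          \<and> root_count (alex_poly k) {z. z \<notin> \<real> \<and> cmod z = 1} = 6)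
       \<and> (k > 0 \<longrightarrow> (\<forall>z\<in>\<real>. poly (alex_poly k) z \<noteq> 0))"
proof (intro conjI impI)
  have fin: "finite {z. poly (alex_poly k) z = 0}" using poly_roots_finite[OF alex_nz[OF assms]] .
  have c8: "card {z. poly (alex_poly k) z = 0} = 8" using card_roots8[OF assms] .
  show "\<forall>z. poly (alex_poly k) z = 0 \<longrightarrow> z \<notin> \<real> \<and> cmod z \<noteq> 1" if k: "k \<in> {1, 2}"
    using case_12[OF k] no_real_root'[of k] k by auto
  show "root_count (alex_poly k) {z. cmod z = 1} = 4" if k: "k \<in> {3..6}"
    using case_36[OF k] root_count_card[OF assms] by (simp add: conj_commute)
  show "\<forall>z. poly (alex_poly k) z = 0 \<and> cmod z = 1 \<longrightarrow> z \<notin> \<real>" if k: "k \<in> {3..6}"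
    using no_real_root'[of k] k by auto
  show "root_count (alex_poly k) {z. z \<notin> \<real> \<and> cmod z \<noteq> 1} = 4" if k: "k \<in> {3..6}"
  proof -
    have "{z \<in> {z. z \<notin> \<real> \<and> cmod z \<noteq> 1}. poly (alex_poly k) z = 0}
        = {z. poly (alex_poly k) z = 0} - {z. poly (alex_poly k) z = 0 \<and> cmod z = 1}"
      using no_real_root'[of k] k by auto
    moreover have "card ({z. poly (alex_poly k) z = 0} - {z. poly (alex_poly k) z = 0 \<and> cmod z = 1}) = 4"
      using card_Diff_subset[of "{z. poly (alex_poly k) z = 0 \<and> cmod z = 1}" "{z. poly (alex_poly k) z = 0}"]
        fin c8 case_36[OF k] by (auto intro: finite_subset)
    ultimately show ?thesis using root_count_card[OF assms] by simp
  qed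
  show "\<forall>z. poly (alex_poly k) z = 0 \<longrightarrow> cmod z = 1" if k: "k \<ge> 7"
    using case_ge7[OF k] by blast
  show "root_count (alex_poly k) \<real> = 2" if k: "k < 0"
    using case_neg(1)[OF k] root_count_card[OF assms] by (simp add: conj_commute)
  show "root_count (alex_poly k) {z. z \<notin> \<real> \<and> cmod z = 1} = 6" if k: "k < 0"
  proof -
    have "{z \<in> {z. z \<notin> \<real> \<and> cmod z = 1}. poly (alex_poly k) z = 0}
        = {z. poly (alex_poly k) z = 0} - {z. poly (alex_poly k) z = 0 \<and> z \<in> \<real>}"
      using case_neg(2)[OF k] by auto
    moreover have "card ({z. poly (alex_poly k) z = 0} - {z. poly (alex_poly k) z = 0 \<and> z \<in> \<real>}) = 6"
      using card_Diff_subset[of "{z. poly (alex_poly k) z = 0 \<and> z \<in> \<real>}" "{z. poly (alex_poly k) z = 0}"]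
        fin c8 case_neg(1)[OF k] by (auto intro: finite_subset)
    ultimately show ?thesis using root_count_card[OF assms] by simp
  qed
  show "\<forall>z\<in>\<real>. poly (alex_poly k) z \<noteq> 0" if k: "k > 0"
    using no_real_root'[OF k] by blast
qed

end
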